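(* Let $N\ge 2$ and let $\Gamma_1,\dots,\Gamma_N$ be nonzero real numbers. Consider the system of $N$ planar point sources $$\dot z_k = -\sum_{l\neq k}\Gamma_l\,\frac{z_k-z_l}{|z_k-z_l|^2}=-\sum_{l\neq k}\frac{\Gamma_l}{\bar z_k-\bar z_l},\qquad k=1,\dots,N,$$ on the set of configurations $(z_1,\dots,z_N)\in\mathbb{C}^N$ with $z_j\neq z_k$ for all $j\neq k$, and let $I=\sum_{k=1}^N\Gamma_k|z_k|^2$ be the moment of inertia. If $\sum_{l<k}\Gamma_k\Gamma_l=0$, then $I$ is a first integral of the system. If $\sum_{l<k}\Gamma_k\Gamma_l\neq 0$, then all solutions are gradient-like with respect to $I$, i.e. $I$ is strictly monotone along every solution.
   Context: The number $-\Gamma_k$ is the intensity of the $k$-th point source; the sum $\sum_{l<k}\Gamma_k\Gamma_l$ runs over all unordered pairs of distinct indices. *)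

theory Defs
  imports "HOL-Analysis.Analysis"
begin

definition source_field :: "nat \<Rightarrow> (nat \<Rightarrow> real) \<Rightarrow> (nat \<Rightarrow> complex) \<Rightarrow> nat \<Rightarrow> complex" where
  "source_field N \<Gamma> z k =
     - (\<Sum>l\<in>{1..N} - {k}. complex_of_real (\<Gamma> l) / (cnj (z k) - cnj (z l)))"

definition inertia :: "nat \<Rightarrow> (nat \<Rightarrow> real) \<Rightarrow> (nat \<Rightarrow> complex) \<Rightarrow> real" where
  "inertia N \<Gamma> z = (\<Sum>k=1..N. \<Gamma> k * (cmod (z k))\<^sup>2)"

definition collision_free :: "nat \<Rightarrow> (nat \<Rightarrow> complex) \<Rightarrow> bool" where
  "collision_free N z \<longleftrightarrow> (\<forall>j\<in>{1..N}. \<forall>k\<in>{1..N}. j \<noteq> k \<longrightarrow> z j \<noteq> z k)"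

definition is_solution :: "nat \<Rightarrow> (nat \<Rightarrow> real) \<Rightarrow> (real \<Rightarrow> nat \<Rightarrow> complex) \<Rightarrow> real set \<Rightarrow> bool" where
  "is_solution N \<Gamma> z T \<longleftrightarrow> is_interval T \<and>
     (\<forall>t\<in>T. collision_free N (z t) \<and>
        (\<forall>k\<in>{1..N}. ((\<lambda>s. z s k) has_vector_derivative source_field N \<Gamma> (z t) k) (at t within T)))"

definition pair_sum :: "nat \<Rightarrow> (nat \<Rightarrow> real) \<Rightarrow> real" where
  "pair_sum N \<Gamma> = (\<Sum>k=1..N. \<Sum>l\<in>{1..<k}. \<Gamma> k * \<Gamma> l)"

end

theory Submission imports Defs begin

lemma cmod2_deriv:
  assumes "(f has_vector_derivative v) (at t within T)"
  shows "((\<lambda>s. (cmod (f s))\<^sup>2) has_derivative (\<lambda>h. h * (2 * Re (cnj (f t) * v)))) (at t within T)"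
proof -
  have d: "(f has_derivative (\<lambda>h. h *\<^sub>R v)) (at t within T)"
    using assms by (simp add: has_vector_derivative_def)
  have "((\<lambda>s. inner (f s) (f s)) has_derivative (\<lambda>h. inner (f t) (h *\<^sub>R v) + inner (h *\<^sub>R v) (f t))) (at t within T)"
    by (rule has_derivative_inner[OF d d])
  moreover have "(\<lambda>h. inner (f t) (h *\<^sub>R v) + inner (h *\<^sub>R v) (f t)) = (\<lambda>h. h * (2 * Re (cnj (f t) * v)))"
    by (auto simp: inner_complex_def algebra_simps)
  ultimately show ?thesis by (simp add: power2_norm_eq_inner)
qed

lemma pair_swap:
  fixes h :: "nat \<Rightarrow> nat \<Rightarrow> real"
  shows "(\<Sum>k\<in>{1..N}. \<Sum>l\<in>{1..N}-{k}. h k l) = (\<Sum>k\<in>{1..N}. \<Sum>l\<in>{1..<k}. h k l + h l k)"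
proof -
  have spl: "\<And>k. k \<in> {1..N} \<Longrightarrow> (\<Sum>l\<in>{1..N}-{k}. h k l) = (\<Sum>l\<in>{l\<in>{1..N}. l < k}. h k l) + (\<Sum>l\<in>{l\<in>{1..N}. k < l}. h k l)"
  proof -
    fix k assume "k \<in> {1..N}"
    have eq: "{1..N}-{k} = {l\<in>{1..N}. l < k} \<union> {l\<in>{1..N}. k < l}" by auto
    show "?thesis k" unfolding eq by (rule sum.union_disjoint) auto
  qed
  have sw: "(\<Sum>k\<in>{1..N}. \<Sum>l\<in>{l\<in>{1..N}. k < l}. h k l) = (\<Sum>l\<in>{1..N}. \<Sum>k\<in>{k\<in>{1..N}. k < l}. h k l)"
    by (rule sum.swap_restrict) auto
  have e: "\<And>k. k \<in> {1..N} \<Longrightarrow> {l\<in>{1..N}. l < k} = {1..<k}" by auto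
  have "(\<Sum>k\<in>{1..N}. \<Sum>l\<in>{1..N}-{k}. h k l) = (\<Sum>k\<in>{1..N}. \<Sum>l\<in>{l\<in>{1..N}. l < k}. h k l) + (\<Sum>k\<in>{1..N}. \<Sum>l\<in>{l\<in>{1..N}. k < l}. h k l)"
    by (subst sum.distrib[symmetric]) (rule sum.cong[OF refl spl])
  also have "\<dots> = (\<Sum>k\<in>{1..N}. \<Sum>l\<in>{1..<k}. h k l) + (\<Sum>k\<in>{1..N}. \<Sum>l\<in>{1..<k}. h l k)"
    unfolding sw by (intro arg_cong2[where f="(+)"] sum.cong refl; metis e)
  finally show ?thesis by (simp add: sum.distrib)
qed

lemma key:
  assumes "collision_free N w"
  shows "(\<Sum>k=1..N. \<Gamma> k * (2 * Re (cnj (w k) * source_field N \<Gamma> w k))) = -2 * pair_sum N \<Gamma>"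
proof -
  define g where "g k l = Re (cnj (w k) / (cnj (w k) - cnj (w l)))" for k l
  have gs: "g k l + g l k = 1" if "k \<in> {1..N}" "l \<in> {1..N}" "l \<noteq> k" for k l
  proof -
    have ne: "cnj (w k) - cnj (w l) \<noteq> 0" using assms that unfolding collision_free_def by auto
    have m: "cnj (w l) / (cnj (w l) - cnj (w k)) = - (cnj (w l) / (cnj (w k) - cnj (w l)))"
      by (metis minus_diff_eq divide_minus_right)
    have "cnj (w k) / (cnj (w k) - cnj (w l)) + cnj (w l) / (cnj (w l) - cnj (w k)) = 1"
      unfolding m using ne by (simp add: diff_divide_distrib[symmetric])
    then have "Re (cnj (w k) / (cnj (w k) - cnj (w l)) + cnj (w l) / (cnj (w l) - cnj (w k))) = 1" by simp
    then show ?thesis unfolding g_def by simp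
  qed
  have rm: "Re (complex_of_real r * x) = r * Re x" for r x by simp
  have c: "cnj (w k) * source_field N \<Gamma> w k = - (\<Sum>l\<in>{1..N}-{k}. complex_of_real (\<Gamma> l) * (cnj (w k) / (cnj (w k) - cnj (w l))))" for k
    unfolding source_field_def mult_minus_right sum_distrib_left
    by (intro arg_cong[where f=uminus] sum.cong refl) (simp add: mult.commute)
  have c2: "Re (cnj (w k) * source_field N \<Gamma> w k) = - (\<Sum>l\<in>{1..N}-{k}. \<Gamma> l * g k l)" for k
    unfolding c g_def by (simp only: uminus_complex.sel Re_sum rm)
  have trm: "\<Gamma> k * (2 * Re (cnj (w k) * source_field N \<Gamma> w k)) = -2 * (\<Sum>l\<in>{1..N}-{k}. \<Gamma> k * \<Gamma> l * g k l)" for k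
    unfolding c2 by (simp add: sum_distrib_left mult_ac sum_negf)
  have pw: "\<Gamma> k * \<Gamma> l * g k l + \<Gamma> l * \<Gamma> k * g l k = \<Gamma> k * \<Gamma> l"
    if k: "k \<in> {1..N}" and l: "l \<in> {1..<k}" for k l
  proof -
    have "\<Gamma> k * \<Gamma> l * g k l + \<Gamma> l * \<Gamma> k * g l k = \<Gamma> k * \<Gamma> l * (g k l + g l k)"
      by (simp add: algebra_simps)
    also have "\<dots> = \<Gamma> k * \<Gamma> l" using gs[of k l] k l by simp
    finally show ?thesis .
  qed
  have "(\<Sum>k=1..N. \<Gamma> k * (2 * Re (cnj (w k) * source_field N \<Gamma> w k))) = -2 * (\<Sum>k\<in>{1..N}. \<Sum>l\<in>{1..N}-{k}. \<Gamma> k * \<Gamma> l * g k l)"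
    by (simp only: trm) (simp add: sum_distrib_left)
  also have "\<dots> = -2 * (\<Sum>k\<in>{1..N}. \<Sum>l\<in>{1..<k}. \<Gamma> k * \<Gamma> l * g k l + \<Gamma> l * \<Gamma> k * g l k)"
    using pair_swap[where N=N and h="\<lambda>k l. \<Gamma> k * \<Gamma> l * g k l"] by simp
  also have "\<dots> = -2 * pair_sum N \<Gamma>"
    unfolding pair_sum_def
    apply (rule arg_cong[where f="\<lambda>x. -2 * x"])
    apply (rule sum.cong, rule refl)
    apply (rule sum.cong, rule refl)
    apply (rule pw; assumption)
    done
  finally show ?thesis .
qed

theorem mainTheorem2:
  fixes N :: nat and \<Gamma> :: "nat \<Rightarrow> real"
  assumes "N \<ge> 2"
    and "\<forall>k\<in>{1..N}. \<Gamma> k \<noteq> 0"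
  shows "(pair_sum N \<Gamma> = 0 \<longrightarrow>
            (\<forall>z T. is_solution N \<Gamma> z T \<longrightarrow>
               (\<exists>c. \<forall>t\<in>T. inertia N \<Gamma> (z t) = c)))
       \<and> (pair_sum N \<Gamma> \<noteq> 0 \<longrightarrow>
            (\<forall>z T. is_solution N \<Gamma> z T \<longrightarrow>
               ((\<forall>s\<in>T. \<forall>t\<in>T. s < t \<longrightarrow> inertia N \<Gamma> (z s) < inertia N \<Gamma> (z t)) \<or>
                (\<forall>s\<in>T. \<forall>t\<in>T. s < t \<longrightarrow> inertia N \<Gamma> (z s) > inertia N \<Gamma> (z t)))))"
proof -
  have lin: "\<exists>c. \<forall>t\<in>T. inertia N \<Gamma> (z t) = c - 2 * pair_sum N \<Gamma> * t"
    if sol: "is_solution N \<Gamma> z T" for z T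
  proof -
    let ?P = "pair_sum N \<Gamma>"
    have cvx: "convex T" using sol is_interval_convex unfolding is_solution_def by blast
    have "((\<lambda>s. inertia N \<Gamma> (z s) + 2 * ?P * s) has_derivative (\<lambda>h. 0)) (at t within T)"
      if t: "t \<in> T" for t
    proof -
      have cf: "collision_free N (z t)" using sol t unfolding is_solution_def by blast
      have dk: "((\<lambda>s. \<Gamma> k * (cmod (z s k))\<^sup>2) has_derivative
                 (\<lambda>h. \<Gamma> k * (h * (2 * Re (cnj (z t k) * source_field N \<Gamma> (z t) k))))) (at t within T)"
        if k: "k \<in> {1..N}" for k
        using sol t k unfolding is_solution_def
        by (intro has_derivative_mult_right cmod2_deriv) blast
      have "((\<lambda>s. inertia N \<Gamma> (z s)) has_derivative
              (\<lambda>h. \<Sum>k=1..N. \<Gamma> k * (h * (2 * Re (cnj (z t k) * source_field N \<Gamma> (z t) k))))) (at t within T)"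
        unfolding inertia_def by (rule has_derivative_sum) (rule dk)
      moreover have "(\<lambda>h. \<Sum>k=1..N. \<Gamma> k * (h * (2 * Re (cnj (z t k) * source_field N \<Gamma> (z t) k))))
                   = (\<lambda>h. h * (-2 * ?P))"
      proof
        fix h
        have "(\<Sum>k=1..N. \<Gamma> k * (h * (2 * Re (cnj (z t k) * source_field N \<Gamma> (z t) k))))
             = h * (\<Sum>k=1..N. \<Gamma> k * (2 * Re (cnj (z t k) * source_field N \<Gamma> (z t) k)))"
          by (simp add: sum_distrib_left mult_ac)
        then show "(\<Sum>k=1..N. \<Gamma> k * (h * (2 * Re (cnj (z t k) * source_field N \<Gamma> (z t) k)))) = h * (-2 * ?P)"
          using key[OF cf] by simp
      qed
      ultimately have "((\<lambda>s. inertia N \<Gamma> (z s)) has_derivative (\<lambda>h. h * (-2 * ?P))) (at t within T)"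
        by simp
      moreover have "((\<lambda>s. 2 * ?P * s) has_derivative (\<lambda>h. 2 * ?P * h)) (at t within T)"
        by (intro derivative_eq_intros) auto
      ultimately have "((\<lambda>s. inertia N \<Gamma> (z s) + 2 * ?P * s) has_derivative (\<lambda>h. h * (-2 * ?P) + 2 * ?P * h)) (at t within T)"
        by (rule has_derivative_add)
      then show ?thesis by (simp add: algebra_simps)
    qed
    then obtain c where "\<forall>t\<in>T. inertia N \<Gamma> (z t) + 2 * ?P * t = c"
      using has_derivative_zero_constant[OF cvx] by blast
    then show ?thesis by (metis add_diff_cancel_right')
  qed
  show ?thesis
  proof (intro conjI impI allI)
    fix z T assume "pair_sum N \<Gamma> = 0" "is_solution N \<Gamma> z T"
    then show "\<exists>c. \<forall>t\<in>T. inertia N \<Gamma> (z t) = c" using lin by force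
  next
    fix z T assume p: "pair_sum N \<Gamma> \<noteq> 0" and "is_solution N \<Gamma> z T"
    then obtain c where c: "\<forall>t\<in>T. inertia N \<Gamma> (z t) = c - 2 * pair_sum N \<Gamma> * t" using lin by blast
    show "(\<forall>s\<in>T. \<forall>t\<in>T. s < t \<longrightarrow> inertia N \<Gamma> (z s) < inertia N \<Gamma> (z t)) \<or>
          (\<forall>s\<in>T. \<forall>t\<in>T. s < t \<longrightarrow> inertia N \<Gamma> (z s) > inertia N \<Gamma> (z t))"
    proof (cases "pair_sum N \<Gamma> < 0")
      case True
      then show ?thesis using c by (auto intro!: disjI1 mult_strict_left_mono_neg)
    next
      case False
      with p have "pair_sum N \<Gamma> > 0" by simp
      then show ?thesis using c by (auto intro!: disjI2 mult_strict_left_mono)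
    qed
  qed
qed

end
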